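(* For every integer $n\ge2$, $$\mathrm{ODP}(\mathrm{Tour}_n,\mathrm{Cycle}_n)=n\,x\,\mathrm{ODP}(\mathrm{Tour}_{n-1},\mathrm{Path}_{n-1}).$$
   Context: $\mathrm{Tour}_n$ is the directed graph on $[n]$ with edges $i\to j$ for all $n\ge i>j\ge1$. $\mathrm{Path}_n$ is the directed graph on $[n]$ with edges $i\to i+1$ for $1\le i\le n-1$. For $n\ge2$, $\mathrm{Cycle}_n$ is the directed multigraph on $[n]$ with edges $i\to i+1$ ($1\le i\le n-1$) and $n\to1$; for $n=2$ its edges are $1\to2$ and $2\to1$. For directed graphs $X,Y$ with $|V(X)|=|V(Y)|$, $\mathrm{DFS}(X,Y)$ has as vertices the bijections $\sigma:V(X)\to V(Y)$. For each $\sigma$ and ordered pair $(a,b)$ of distinct vertices, it has $m_X(a,b)m_Y(\sigma(a),\sigma(b))$ edges from $\sigma$ to $\sigma\circ(a\,b)$, where $m_X(a,b)$ is the number of edges $a\to b$ in $X$. Thus $\mathrm{outdeg}(\sigma)=\sum_{a\ne b}m_X(a,b)m_Y(\sigma(a),\sigma(b))$ and $\mathrm{ODP}(X,Y)=\sum_\sigma x^{\mathrm{outdeg}(\sigma)}$. *)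

theory Defs
  imports "HOL-Computational_Algebra.Polynomial" "HOL-Combinatorics.Permutations"
begin

text \<open>A directed multigraph on vertex set [n] = {1..n} is given by its edge
  multiplicity function m a b = number of edges a -> b.\<close>

definition tour :: "nat \<Rightarrow> nat \<Rightarrow> nat \<Rightarrow> nat" where
  "tour n i j = (if n \<ge> i \<and> i > j \<and> j \<ge> 1 then 1 else 0)"

definition path :: "nat \<Rightarrow> nat \<Rightarrow> nat \<Rightarrow> nat" where
  "path n i j = (if 1 \<le> i \<and> i + 1 \<le> n \<and> j = i + 1 then 1 else 0)"

definition cycle :: "nat \<Rightarrow> nat \<Rightarrow> nat \<Rightarrow> nat" where
  "cycle n i j = (if 1 \<le> i \<and> i + 1 \<le> n \<and> j = i + 1 then 1 else 0)
                 + (if i = n \<and> j = 1 then 1 else 0)"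

text \<open>Bijections [n] -> [n] are represented as permutations of {1..n}
  (identity outside). Out-degree of sigma in DFS(X,Y).\<close>

definition outdeg :: "nat \<Rightarrow> (nat \<Rightarrow> nat \<Rightarrow> nat) \<Rightarrow> (nat \<Rightarrow> nat \<Rightarrow> nat) \<Rightarrow> (nat \<Rightarrow> nat) \<Rightarrow> nat" where
  "outdeg n X Y \<sigma> = (\<Sum>a\<in>{1..n}. \<Sum>b\<in>{1..n} - {a}. X a b * Y (\<sigma> a) (\<sigma> b))"

definition ODP :: "nat \<Rightarrow> (nat \<Rightarrow> nat \<Rightarrow> nat) \<Rightarrow> (nat \<Rightarrow> nat \<Rightarrow> nat) \<Rightarrow> int poly" where
  "ODP n X Y = (\<Sum>\<sigma>\<in>{\<sigma>. \<sigma> permutes {1..n}}. monom 1 (outdeg n X Y \<sigma>))"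

end

theory Submission
  imports Defs
begin

lemma outdeg_tour:
  assumes p: "\<sigma> permutes {1..n}"
  shows "outdeg n (tour n) Y \<sigma> =
    (\<Sum>u\<in>{1..n}. \<Sum>v\<in>{1..n}. if v \<noteq> u \<and> inv \<sigma> v < inv \<sigma> u then Y u v else 0)"
proof -
  let ?t = "inv \<sigma>"
  have pt: "?t permutes {1..n}" using p by (rule permutes_inv)
  have bt: "bij_betw ?t {1..n} {1..n}" using pt by (rule permutes_imp_bij)
  have "outdeg n (tour n) Y \<sigma> = (\<Sum>a\<in>{1..n}. \<Sum>b\<in>{1..n}. if b \<noteq> a then tour n a b * Y (\<sigma> a) (\<sigma> b) else 0)"
    unfolding outdeg_def
  proof (rule sum.cong[OF refl])
    fix a assume "a \<in> {1..n}"
    have hA: "{1..n} - {a} = {b\<in>{1..n}. b \<noteq> a}" by auto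
    show "(\<Sum>b\<in>{1..n} - {a}. tour n a b * Y (\<sigma> a) (\<sigma> b)) = (\<Sum>b\<in>{1..n}. if b \<noteq> a then tour n a b * Y (\<sigma> a) (\<sigma> b) else 0)"
      unfolding hA by (rule sum.inter_filter) simp
  qed
  also have "\<dots> = (\<Sum>u\<in>{1..n}. \<Sum>b\<in>{1..n}. if b \<noteq> ?t u then tour n (?t u) b * Y (\<sigma> (?t u)) (\<sigma> b) else 0)"
    by (rule sum.reindex_bij_betw[OF bt, symmetric])
  also have "\<dots> = (\<Sum>u\<in>{1..n}. \<Sum>v\<in>{1..n}. if ?t v \<noteq> ?t u then tour n (?t u) (?t v) * Y (\<sigma> (?t u)) (\<sigma> (?t v)) else 0)"
    by (rule sum.cong[OF refl], rule sum.reindex_bij_betw[OF bt, symmetric])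
  also have "\<dots> = (\<Sum>u\<in>{1..n}. \<Sum>v\<in>{1..n}. if v \<noteq> u \<and> ?t v < ?t u then Y u v else 0)"
  proof (intro sum.cong refl)
    fix u v assume u: "u \<in> {1..n}" and v: "v \<in> {1..n}"
    have tu: "?t u \<in> {1..n}" and tv: "?t v \<in> {1..n}"
      using u v permutes_in_image[OF pt] by auto
    have eq: "?t v = ?t u \<longleftrightarrow> v = u" by (metis permutes_inverses(1)[OF p])
    show "(if ?t v \<noteq> ?t u then tour n (?t u) (?t v) * Y (\<sigma> (?t u)) (\<sigma> (?t v)) else 0) =
      (if v \<noteq> u \<and> ?t v < ?t u then Y u v else 0)"
      using tu tv eq by (auto simp: tour_def permutes_inverses(1)[OF p])
  qed
  finally show ?thesis .
qed

lemma cycle_row: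
  assumes n: "n \<ge> 2" and u: "u \<in> {1..n}"
  shows "(\<Sum>v\<in>{1..n}. if v \<noteq> u \<and> t v < t u then cycle n u v else 0)
     = (if t (u mod n + 1) < t u then 1 else 0)"
proof -
  let ?w = "u mod n + 1"
  have cyc: "cycle n u v = (if v = ?w then 1 else 0)" for v
    using n u by (cases "u = n") (auto simp: cycle_def)
  have w: "?w \<in> {1..n}" using n u by (auto simp: Suc_leI)
  have wu: "?w \<noteq> u" using n u by (cases "u = n") auto
  have "(\<Sum>v\<in>{1..n}. if v \<noteq> u \<and> t v < t u then cycle n u v else 0)
      = (\<Sum>v\<in>{1..n}. if v = ?w then (if ?w \<noteq> u \<and> t ?w < t u then 1 else 0) else 0)"
    by (rule sum.cong) (auto simp: cyc)
  also have "\<dots> = (if t ?w < t u then 1 else 0)"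
    using w wu by (simp add: sum.delta)
  finally show ?thesis .
qed

lemma path_row:
  assumes u: "u \<in> {1..m}"
  shows "(\<Sum>v\<in>{1..m}. if v \<noteq> u \<and> t v < t u then path m u v else 0)
     = (if u < m \<and> t (u + 1) < t u then 1 else 0)"
proof -
  have pa: "path m u v = (if u < m \<and> v = u + 1 then 1 else 0)" for v
    using u by (auto simp: path_def)
  show ?thesis
  proof (cases "u < m")
    case True
    have "(\<Sum>v\<in>{1..m}. if v \<noteq> u \<and> t v < t u then path m u v else 0)
      = (\<Sum>v\<in>{1..m}. if v = u + 1 then (if t (u+1) < t u then 1 else 0) else 0)"
      by (rule sum.cong) (auto simp: pa True)
    also have "\<dots> = (if u < m \<and> t (u + 1) < t u then 1 else 0)"
      using True u by (simp add: sum.delta)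
    finally show ?thesis .
  qed (simp add: pa)
qed

definition Dc :: "nat \<Rightarrow> (nat \<Rightarrow> nat) \<Rightarrow> nat" where
  "Dc n t = (\<Sum>u\<in>{1..n}. if t (u mod n + 1) < t u then 1 else 0)"

definition Dp :: "nat \<Rightarrow> (nat \<Rightarrow> nat) \<Rightarrow> nat" where
  "Dp m t = (\<Sum>u\<in>{1..<m}. if t (u + 1) < t u then 1 else 0)"

lemma outdeg_cycle:
  assumes "\<sigma> permutes {1..n}" "n \<ge> 2"
  shows "outdeg n (tour n) (cycle n) \<sigma> = Dc n (inv \<sigma>)"
  unfolding outdeg_tour[OF assms(1)] Dc_def
  by (rule sum.cong[OF refl], rule cycle_row[OF assms(2)])

lemma outdeg_path:
  assumes "\<sigma> permutes {1..m}"
  shows "outdeg m (tour m) (path m) \<sigma> = Dp m (inv \<sigma>)"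
proof -
  have "outdeg m (tour m) (path m) \<sigma> = (\<Sum>u\<in>{1..m}. if u < m \<and> inv \<sigma> (u + 1) < inv \<sigma> u then 1 else 0)"
    unfolding outdeg_tour[OF assms(1)]
    by (rule sum.cong[OF refl], rule path_row)
  also have "\<dots> = (\<Sum>u\<in>{u\<in>{1..m}. u < m}. if inv \<sigma> (u + 1) < inv \<sigma> u then 1 else 0)"
    unfolding sum.inter_filter[OF finite_atLeastAtMost] by (rule sum.cong) auto
  also have "{u\<in>{1..m}. u < m} = {1..<m}" by auto
  finally show ?thesis unfolding Dp_def .
qed

definition sh :: "nat \<Rightarrow> nat \<Rightarrow> nat \<Rightarrow> nat" where
  "sh n k u = (if u \<in> {1..n} then (u - 1 + k) mod n + 1 else u)"

lemma sh_in: "u \<in> {1..n} \<Longrightarrow> sh n k u \<in> {1..n}"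
  unfolding sh_def by (auto intro: Suc_leI)

lemma sh_out: "u \<notin> {1..n} \<Longrightarrow> sh n k u = u"
  unfolding sh_def by auto

lemma sh_add: "sh n a (sh n b u) = sh n (a + b) u"
proof (cases "u \<in> {1..n}")
  case True
  then have sb: "sh n b u \<in> {1..n}" by (rule sh_in)
  from True obtain v where v: "u = Suc v" by (cases u) auto
  have "sh n a (sh n b u) = (sh n b u - 1 + a) mod n + 1" using sb by (simp add: sh_def)
  also have "sh n b u - 1 = (v + b) mod n" using True v by (simp add: sh_def)
  also have "((v + b) mod n + a) mod n = (v + (a + b)) mod n" by (metis mod_add_left_eq add.assoc add.commute)
  also have "(v + (a + b)) mod n + 1 = sh n (a + b) u" using True v by (simp add: sh_def)
  finally show ?thesis .
next
  case False then show ?thesis by (simp only: sh_out[OF False])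
qed

lemma sh_n: "sh n n u = u"
proof (cases "u \<in> {1..n}")
  case True
  then obtain v where v: "u = Suc v" "v < n" by (cases u) auto
  then show ?thesis using True unfolding sh_def by simp
next
  case False then show ?thesis by (simp only: sh_out[OF False])
qed

lemma sh_at_n: "k \<in> {1..n} \<Longrightarrow> sh n k n = k"
proof -
  assume k: "k \<in> {1..n}"
  then obtain j where j: "k = Suc j" "j < n" by (cases k) auto
  then have "n - 1 + k = j + n" by auto
  then have "(n - 1 + k) mod n = j" using j by simp
  then show ?thesis using k j unfolding sh_def by auto
qed

lemma sh_inv: "k \<le> n \<Longrightarrow> sh n (n - k) (sh n k u) = u" "k \<le> n \<Longrightarrow> sh n k (sh n (n - k) u) = u"
  by (simp_all add: sh_add sh_n)

lemma sh_permutes: "k \<le> n \<Longrightarrow> sh n k permutes {1..n}"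
proof -
  assume k: "k \<le> n"
  have i1: "sh n k ` {1..n} \<subseteq> {1..n}" "sh n (n - k) ` {1..n} \<subseteq> {1..n}"
    using sh_in by blast+
  show ?thesis
    apply (rule bij_imp_permutes)
     apply (rule bij_betw_byWitness[where f'="sh n (n - k)"])
    using i1 k by (auto simp: sh_inv sh_out)
qed

lemma sh_nx: assumes u: "u \<in> {1..n}" shows "sh n k u mod n + 1 = sh n k (u mod n + 1)"
proof -
  have n: "n \<ge> 1" using u by auto
  have w: "u mod n + 1 \<in> {1..n}" using n by (auto intro: Suc_leI)
  have "sh n k u mod n = ((u - 1 + k) mod n + 1) mod n" using u by (simp add: sh_def)
  also have "\<dots> = (u - 1 + k + 1) mod n" by (simp add: mod_Suc_eq)
  also have "\<dots> = (u + k) mod n" using u by simp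
  finally have l: "sh n k u mod n = (u + k) mod n" .
  have "sh n k (u mod n + 1) = (u mod n + k) mod n + 1" using w by (simp add: sh_def)
  also have "\<dots> = (u + k) mod n + 1" by (simp add: mod_add_left_eq)
  finally show ?thesis using l by simp
qed

lemma Dc_sh: assumes k: "k \<le> n" shows "Dc n (t \<circ> sh n k) = Dc n t"
proof -
  have b: "bij_betw (sh n k) {1..n} {1..n}" using sh_permutes[OF k] by (rule permutes_imp_bij)
  have "Dc n (t \<circ> sh n k) = (\<Sum>u\<in>{1..n}. (\<lambda>w. if t (w mod n + 1) < t w then 1 else 0) (sh n k u))"
    unfolding Dc_def
  proof (rule sum.cong[OF refl])
    fix u assume "u \<in> {1..n}"
    then show "(if (t \<circ> sh n k) (u mod n + 1) < (t \<circ> sh n k) u then 1 else 0) =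
      (\<lambda>w. if t (w mod n + 1) < t w then 1 else 0) (sh n k u)"
      using sh_nx[of u n k] by simp
  qed
  also have "\<dots> = Dc n t" unfolding Dc_def by (rule sum.reindex_bij_betw[OF b])
  finally show ?thesis .
qed

lemma Dc_fix: assumes n: "n \<ge> 2" and p: "\<sigma> permutes {1..n}" and f: "\<sigma> n = n"
  shows "Dc n \<sigma> = Suc (Dp (n - 1) \<sigma>)"
proof -
  let ?f = "\<lambda>u. if \<sigma> (u mod n + 1) < \<sigma> u then 1 else (0::nat)"
  have s1: "{1..n} = insert n (insert (n - 1) {1..<n - 1})" using n by auto
  have fn: "?f n = 1"
  proof -
    have "\<sigma> 1 \<in> {1..n}" using n permutes_in_image[OF p] by auto
    moreover have "\<sigma> 1 \<noteq> \<sigma> n" using n permutes_inj[OF p] by (metis inj_eq one_neq_zero numeral_le_one_iff semiring_norm(69) le_numeral_extra(4) One_nat_def nat_le_linear not_numeral_le_zero)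
    ultimately show ?thesis using f by auto
  qed
  have fn1: "?f (n - 1) = 0"
  proof -
    have "(n - 1) mod n + 1 = n" using n by simp
    moreover have "\<sigma> (n - 1) \<in> {1..n}" using n permutes_in_image[OF p] by auto
    ultimately show ?thesis using f by auto
  qed
  have rest: "(\<Sum>u\<in>{1..<n - 1}. ?f u) = Dp (n - 1) \<sigma>"
    unfolding Dp_def by (rule sum.cong) auto
  have "Dc n \<sigma> = ?f n + (?f (n - 1) + (\<Sum>u\<in>{1..<n - 1}. ?f u))"
  proof -
    have a1: "n \<notin> insert (n-1) {1..<n-1}" using n by auto
    have a2: "n-1 \<notin> {1..<n-1}" by auto
    show ?thesis unfolding Dc_def s1
      by (simp only: sum.insert finite_insert finite_atLeastLessThan a1 a2 simp_thms)
  qed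
  then show ?thesis using fn fn1 rest by simp
qed

lemma sum_inv_perm:
  fixes g :: "(nat \<Rightarrow> nat) \<Rightarrow> 'a::comm_monoid_add"
  shows "(\<Sum>\<sigma>\<in>{\<sigma>. \<sigma> permutes S}. g (inv \<sigma>)) = (\<Sum>\<sigma>\<in>{\<sigma>. \<sigma> permutes S}. g \<sigma>)"
proof (rule sum.reindex_bij_betw)
  show "bij_betw inv {\<sigma>. \<sigma> permutes S} {\<sigma>. \<sigma> permutes S}"
    by (rule bij_betw_byWitness[where f'=inv]) (auto simp: permutes_inv_inv permutes_inv)
qed

lemma block:
  assumes n: "n \<ge> 2" and k: "k \<in> {1..n}"
  shows "(\<Sum>\<tau>\<in>{\<tau>\<in>{\<sigma>. \<sigma> permutes {1..n}}. inv \<tau> n = k}. monom (1::int) (Dc n \<tau>))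
       = (\<Sum>\<sigma>\<in>{\<sigma>\<in>{\<sigma>. \<sigma> permutes {1..n}}. \<sigma> n = n}. monom 1 (Dc n \<sigma>))"
proof -
  let ?s = "sh n (n - k)"
  let ?S = "{\<sigma>\<in>{\<sigma>. \<sigma> permutes {1..n}}. \<sigma> n = n}"
  let ?T = "{\<tau>\<in>{\<sigma>. \<sigma> permutes {1..n}}. inv \<tau> n = k}"
  have kn: "k \<le> n" using k by auto
  have sk: "?s k = n"
  proof -
    have "sh n (n - k) (sh n k n) = n" by (rule sh_inv(1)[OF kn])
    then show ?thesis using sh_at_n[OF k] by simp
  qed
  have ps: "?s permutes {1..n}" by (rule sh_permutes) simp
  have pk: "sh n k permutes {1..n}" by (rule sh_permutes[OF kn])
  have b: "bij_betw (\<lambda>\<sigma>. \<sigma> \<circ> ?s) ?S ?T"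
  proof (rule bij_betw_byWitness[where f'="\<lambda>\<tau>. \<tau> \<circ> sh n k"])
    show "\<forall>a\<in>?S. a \<circ> ?s \<circ> sh n k = a"
      by (auto simp: fun_eq_iff sh_inv(1)[OF kn])
    show "\<forall>a\<in>?T. a \<circ> sh n k \<circ> ?s = a"
      by (auto simp: fun_eq_iff sh_inv(2)[OF kn])
    show "(\<lambda>\<sigma>. \<sigma> \<circ> ?s) ` ?S \<subseteq> ?T"
    proof
      fix x assume "x \<in> (\<lambda>\<sigma>. \<sigma> \<circ> ?s) ` ?S"
      then obtain \<sigma> where x: "x = \<sigma> \<circ> ?s" and p: "\<sigma> permutes {1..n}" and f: "\<sigma> n = n" by auto
      have px: "x permutes {1..n}" unfolding x by (rule permutes_compose[OF ps p])
      have "x k = n" using x sk f by simp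
      then have "inv x n = k" using permutes_inv_eq[OF px] by simp
      then show "x \<in> ?T" using px by simp
    qed
    show "(\<lambda>\<tau>. \<tau> \<circ> sh n k) ` ?T \<subseteq> ?S"
    proof
      fix x assume "x \<in> (\<lambda>\<tau>. \<tau> \<circ> sh n k) ` ?T"
      then obtain \<tau> where x: "x = \<tau> \<circ> sh n k" and p: "\<tau> permutes {1..n}" and f: "inv \<tau> n = k" by auto
      have px: "x permutes {1..n}" unfolding x by (rule permutes_compose[OF pk p])
      have "\<tau> k = n" using f permutes_inv_eq[OF p] by simp
      then have "x n = n" using x sh_at_n[OF k] by simp
      then show "x \<in> ?S" using px by simp
    qed
  qed
  have "(\<Sum>\<sigma>\<in>?S. monom (1::int) (Dc n \<sigma>)) = (\<Sum>\<sigma>\<in>?S. monom 1 (Dc n (\<sigma> \<circ> ?s)))"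
    by (rule sum.cong[OF refl]) (simp add: Dc_sh)
  also have "\<dots> = (\<Sum>\<tau>\<in>?T. monom 1 (Dc n \<tau>))"
    by (rule sum.reindex_bij_betw[OF b, where g="\<lambda>\<tau>. monom 1 (Dc n \<tau>)"])
  finally show ?thesis by simp
qed

lemma fixset: fixes n :: nat assumes n: "n \<ge> 2"
  shows "{\<sigma>\<in>{\<sigma>. \<sigma> permutes {1..n}}. \<sigma> n = n} = {\<sigma>. \<sigma> permutes {1..n - 1}}"
proof safe
  fix \<sigma> assume p: "\<sigma> permutes {1..n}" and f: "\<sigma> n = n"
  show "\<sigma> permutes {1..n - 1}"
  proof (rule permutes_superset[OF p])
    fix x assume "x \<in> {1..n} - {1..n - 1}"
    then have "x = n" by auto
    then show "\<sigma> x = x" using f by simp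
  qed
next
  fix \<sigma> assume p: "\<sigma> permutes {1..n - 1}"
  show "\<sigma> permutes {1..n}" by (rule permutes_subset[OF p]) auto
  show "\<sigma> n = n" by (rule permutes_not_in[OF p]) (use n in auto)
qed

theorem mainTheorem13:
  fixes n :: nat
  assumes "n \<ge> 2"
  shows "ODP n (tour n) (cycle n)
         = smult (of_nat n) [:0, 1:] * ODP (n - 1) (tour (n - 1)) (path (n - 1))"
proof -
  have n: "n \<ge> 2" by fact
  let ?P = "{\<sigma>. \<sigma> permutes {1..n}}"
  let ?Q = "{\<sigma>. \<sigma> permutes {1..n - 1}}"
  let ?f = "\<lambda>\<tau>. monom (1::int) (Dc n \<tau>)"
  have fP: "finite ?P" by (rule finite_permutations) simp
  have "ODP n (tour n) (cycle n) = (\<Sum>\<sigma>\<in>?P. ?f (inv \<sigma>))"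
    unfolding ODP_def by (rule sum.cong[OF refl]) (simp add: outdeg_cycle[OF _ n])
  also have "\<dots> = (\<Sum>\<sigma>\<in>?P. ?f \<sigma>)" by (rule sum_inv_perm)
  also have "\<dots> = (\<Sum>k\<in>{1..n}. \<Sum>\<tau>\<in>{\<tau>\<in>?P. inv \<tau> n = k}. ?f \<tau>)"
  proof (rule sum.group[symmetric, OF fP])
    show "finite {1..n}" by simp
    show "(\<lambda>\<tau>. inv \<tau> n) ` ?P \<subseteq> {1..n}"
    proof
      fix y assume "y \<in> (\<lambda>\<tau>. inv \<tau> n) ` ?P"
      then obtain \<tau> where y: "y = inv \<tau> n" and p: "\<tau> permutes {1..n}" by auto
      have "n \<in> {1..n}" using n by simp
      then show "y \<in> {1..n}" unfolding y using permutes_in_image[OF permutes_inv[OF p]] by blast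
    qed
  qed
  also have "\<dots> = (\<Sum>k\<in>{1..n}. \<Sum>\<sigma>\<in>{\<sigma>\<in>?P. \<sigma> n = n}. ?f \<sigma>)"
    by (rule sum.cong[OF refl]) (rule block[OF n])
  also have "\<dots> = of_nat n * (\<Sum>\<sigma>\<in>?Q. ?f \<sigma>)"
    unfolding fixset[OF n] by simp
  also have "(\<Sum>\<sigma>\<in>?Q. ?f \<sigma>) = (\<Sum>\<sigma>\<in>?Q. [:0, 1:] * monom 1 (Dp (n - 1) \<sigma>))"
  proof (rule sum.cong[OF refl])
    fix \<sigma> assume "\<sigma> \<in> ?Q"
    then have "\<sigma> \<in> {\<sigma>\<in>?P. \<sigma> n = n}" using fixset[OF n] by simp
    then show "?f \<sigma> = [:0, 1:] * monom 1 (Dp (n - 1) \<sigma>)"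
      using Dc_fix[OF n] by (simp add: monom_Suc)
  qed
  also have "\<dots> = [:0, 1:] * (\<Sum>\<sigma>\<in>?Q. monom 1 (Dp (n - 1) (inv \<sigma>)))"
    unfolding sum_distrib_left sum_inv_perm[where g="\<lambda>\<sigma>. [:0, 1:] * monom 1 (Dp (n - 1) \<sigma>)"] ..
  also have "(\<Sum>\<sigma>\<in>?Q. monom 1 (Dp (n - 1) (inv \<sigma>))) = ODP (n - 1) (tour (n - 1)) (path (n - 1))"
    unfolding ODP_def by (rule sum.cong[OF refl]) (simp add: outdeg_path)
  finally show ?thesis by (simp add: of_nat_mult_conv_smult)
qed

end
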